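(* The product of any collection of mild mixing systems is mild mixing: if $(X_i,T_i)$, $i\in I$, are mild mixing, then the product system $(\prod_{i\in I}X_i,\prod_{i\in I}T_i)$ is mild mixing.
   Context: A dynamical system $(X,T)$ consists of a compact metric space $X$ and a homeomorphism $T:X\to X$. $\mathbb N=\{1,2,\dots\}$; for $U,V\subset X$, $N(U,V)=\{n\in\mathbb N:T^n(U)\cap V\ne\emptyset\}$. For a finite $F\subset\mathbb Z$, $\sigma_F$ is the sum of its elements ($\sigma_\emptyset=0$); for $A\subset\mathbb Z$, $IP(A)=\{\sigma_F:F\subset A \text{ finite}\}$ and $SIP(A)=\{a-b:a,b\in IP(A)\}$. A set $B\subset\mathbb N$ is an SIP set if $SIP(A)\cap\mathbb N\subset B$ for some infinite $A\subset\mathbb N$. A system $(X,T)$ is mild mixing if for all nonempty open $U,V\subset X$, the set $N(U,V)$ has nonempty intersection with every SIP set. *)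

theory Defs
  imports "HOL-Analysis.Analysis"
begin

definition dyn_system :: "'a topology \<Rightarrow> ('a \<Rightarrow> 'a) \<Rightarrow> bool" where
  "dyn_system X T \<longleftrightarrow> compact_space X \<and> metrizable_space X \<and> homeomorphic_map X X T"

definition return_times :: "('a \<Rightarrow> 'a) \<Rightarrow> 'a set \<Rightarrow> 'a set \<Rightarrow> nat set" where
  "return_times T U V = {n. n \<ge> 1 \<and> (T ^^ n) ` U \<inter> V \<noteq> {}}"

definition IP :: "int set \<Rightarrow> int set" where
  "IP A = {\<Sum>F | F. F \<subseteq> A \<and> finite F}"

definition SIP :: "int set \<Rightarrow> int set" where
  "SIP A = {a - b | a b. a \<in> IP A \<and> b \<in> IP A}"

definition SIP_set :: "nat set \<Rightarrow> bool" where
  "SIP_set B \<longleftrightarrow> (\<exists>A::nat set. infinite A \<and> A \<subseteq> {1..} \<and>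
      {n::nat. n \<ge> 1 \<and> int n \<in> SIP (int ` A)} \<subseteq> B)"

text \<open>Mild mixing property (topological part; the system conditions are in dyn_system).\<close>
definition mild_mixing :: "'a topology \<Rightarrow> ('a \<Rightarrow> 'a) \<Rightarrow> bool" where
  "mild_mixing X T \<longleftrightarrow> (\<forall>U V. openin X U \<and> openin X V \<and> U \<noteq> {} \<and> V \<noteq> {} \<longrightarrow>
      (\<forall>B. SIP_set B \<longrightarrow> return_times T U V \<inter> B \<noteq> {}))"

definition prod_map :: "'i set \<Rightarrow> ('i \<Rightarrow> 'a \<Rightarrow> 'a) \<Rightarrow> ('i \<Rightarrow> 'a) \<Rightarrow> ('i \<Rightarrow> 'a)" where
  "prod_map I T x = (\<lambda>i\<in>I. T i (x i))"

end

theory Submission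
  imports Defs
begin

lemma SIP_iff:
  "x \<in> SIP A \<longleftrightarrow> (\<exists>F G. F \<subseteq> A \<and> G \<subseteq> A \<and> finite F \<and> finite G \<and> F \<inter> G = {} \<and> x = \<Sum>F - \<Sum>G)"
proof
  assume "x \<in> SIP A"
  then obtain F G where FG: "F \<subseteq> A" "G \<subseteq> A" "finite F" "finite G" "x = \<Sum>F - \<Sum>G"
    unfolding SIP_def IP_def by blast
  have "\<Sum>F = \<Sum>(F - G) + \<Sum>(F \<inter> G)"
    using FG by (metis Diff_Diff_Int Diff_subset add.commute inf_le1 sum.subset_diff)
  moreover have "\<Sum>G = \<Sum>(G - F) + \<Sum>(F \<inter> G)"
    using FG by (metis Diff_Diff_Int Diff_subset add.commute inf_le2 inf_commute sum.subset_diff)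
  ultimately have "x = \<Sum>(F - G) - \<Sum>(G - F)" using FG by simp
  then show "\<exists>F G. F \<subseteq> A \<and> G \<subseteq> A \<and> finite F \<and> finite G \<and> F \<inter> G = {} \<and> x = \<Sum>F - \<Sum>G"
    using FG by (intro exI[of _ "F - G"] exI[of _ "G - F"]) auto
next
  assume "\<exists>F G. F \<subseteq> A \<and> G \<subseteq> A \<and> finite F \<and> finite G \<and> F \<inter> G = {} \<and> x = \<Sum>F - \<Sum>G"
  then show "x \<in> SIP A" unfolding SIP_def IP_def by blast
qed

lemma SIP_mono: "A \<subseteq> A' \<Longrightarrow> SIP A \<subseteq> SIP A'"
  unfolding SIP_def IP_def by blast

lemma SIP_uminus: "x \<in> SIP A \<Longrightarrow> - x \<in> SIP A"
  unfolding SIP_def by force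

lemma SIP_zero: "0 \<in> SIP A"
  unfolding SIP_def IP_def by force

lemma SIP_single: "a \<in> A \<Longrightarrow> a \<in> SIP A"
proof -
  assume "a \<in> A"
  then have "a = \<Sum>{a} - \<Sum>{}" "{a} \<subseteq> A" by auto
  then show ?thesis unfolding SIP_iff by blast
qed

lemma SIP_add:
  assumes "x \<in> SIP A1" "y \<in> SIP A2" "A1 \<inter> A2 = {}"
  shows "x + y \<in> SIP (A1 \<union> A2)"
proof -
  obtain F1 G1 where 1: "F1 \<subseteq> A1" "G1 \<subseteq> A1" "finite F1" "finite G1" "x = \<Sum>F1 - \<Sum>G1"
    using assms(1) unfolding SIP_def IP_def by blast
  obtain F2 G2 where 2: "F2 \<subseteq> A2" "G2 \<subseteq> A2" "finite F2" "finite G2" "y = \<Sum>F2 - \<Sum>G2"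
    using assms(2) unfolding SIP_def IP_def by blast
  have d1: "F1 \<inter> F2 = {}" "G1 \<inter> G2 = {}" using 1 2 assms(3) by auto
  have "x + y = \<Sum>(F1 \<union> F2) - \<Sum>(G1 \<union> G2)"
    using 1 2 d1 by (simp add: sum.union_disjoint)
  then show ?thesis unfolding SIP_def IP_def using 1 2 by blast
qed

lemma SIP_sum:
  assumes "finite P" "\<And>j. j \<in> P \<Longrightarrow> f j \<in> SIP (E j)"
    "\<And>j k. j \<in> P \<Longrightarrow> k \<in> P \<Longrightarrow> j \<noteq> k \<Longrightarrow> E j \<inter> E k = {}"
  shows "(\<Sum>j\<in>P. f j) \<in> SIP (\<Union>j\<in>P. E j)"
  using assms
proof (induction P rule: finite_induct)
  case empty
  then show ?case by (simp add: SIP_zero)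
next
  case (insert a P)
  have "f a + (\<Sum>j\<in>P. f j) \<in> SIP (E a \<union> (\<Union>j\<in>P. E j))"
    using insert by (intro SIP_add) auto
  then show ?case using insert by simp
qed


definition lac :: "int set \<Rightarrow> bool" where
  "lac C \<longleftrightarrow> (\<forall>c\<in>C. c \<ge> 1) \<and> (\<forall>t\<in>C. 2 * \<Sum>{c\<in>C. c < t} < t)"

lemma lac_finite_below: "lac C \<Longrightarrow> finite {c\<in>C. c < t}"
  by (rule finite_subset[of _ "{1..t}"]) (auto simp: lac_def)

lemma lac_finite_le: "lac C \<Longrightarrow> finite {c\<in>C. c \<le> t}"
  by (rule finite_subset[of _ "{1..t}"]) (auto simp: lac_def)

lemma lac_big:
  assumes L: "lac C" and S: "S1 \<subseteq> C" "S2 \<subseteq> C" "finite S1" "finite S2" "S1 \<inter> S2 = {}"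
    and M: "\<forall>s\<in>S1 \<union> S2. s > M" and pos: "\<Sum>S1 - \<Sum>S2 > 0"
  shows "\<Sum>S1 - \<Sum>S2 > \<Sum>{c\<in>C. c \<le> M}"
proof -
  have ne: "S1 \<union> S2 \<noteq> {}" using pos by auto
  define t where "t = Max (S1 \<union> S2)"
  have tin: "t \<in> S1 \<union> S2" using ne S Max_in[of "S1 \<union> S2"] by (simp add: t_def)
  have tmax: "\<And>s. s \<in> S1 \<union> S2 \<Longrightarrow> s \<le> t" using S by (simp add: t_def)
  have tC: "t \<in> C" using tin S by auto
  have lt: "2 * \<Sum>{c\<in>C. c < t} < t" using L tC by (auto simp: lac_def)
  have nn: "\<And>X. X \<subseteq> C \<Longrightarrow> \<Sum>X \<ge> 0" proof -
    fix X assume "X \<subseteq> C" then show "\<Sum>X \<ge> 0" using L unfolding lac_def by (intro sum_nonneg) force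
  qed
  have fb: "finite {c\<in>C. c < t}" using L by (rule lac_finite_below)
  have sub_le: "\<Sum>X \<le> \<Sum>{c\<in>C. c < t}" if "X \<subseteq> {c\<in>C. c < t}" for X
    using that fb L by (intro sum_mono2) (auto simp: lac_def)
  have tM: "t > M" using M tin by auto
  show ?thesis
  proof (cases "t \<in> S1")
    case True
    then have "t \<notin> S2" using S by auto
    then have "S2 \<subseteq> {c\<in>C. c < t}" using tmax S by fastforce
    then have s2: "\<Sum>S2 \<le> \<Sum>{c\<in>C. c < t}" by (rule sub_le)
    have "\<Sum>S1 = t + \<Sum>(S1 - {t})" using True S by (simp add: sum.remove)
    moreover have "\<Sum>(S1 - {t}) \<ge> 0" using S by (intro nn) auto
    ultimately have s1: "\<Sum>S1 \<ge> t" by simp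
    have "{c\<in>C. c \<le> M} \<subseteq> {c\<in>C. c < t}" using tM by auto
    then have "\<Sum>{c\<in>C. c \<le> M} \<le> \<Sum>{c\<in>C. c < t}" by (rule sub_le)
    with s1 s2 lt show ?thesis by linarith
  next
    case False
    then have t2: "t \<in> S2" using tin by auto
    then have "S1 \<subseteq> {c\<in>C. c < t}" using tmax S False by fastforce
    then have s1: "\<Sum>S1 \<le> \<Sum>{c\<in>C. c < t}" by (rule sub_le)
    have "\<Sum>S2 = t + \<Sum>(S2 - {t})" using t2 S by (simp add: sum.remove)
    moreover have "\<Sum>(S2 - {t}) \<ge> 0" using S by (intro nn) auto
    ultimately have "\<Sum>S2 \<ge> t" by simp
    moreover have "\<Sum>{c\<in>C. c < t} \<ge> 0" by (intro nn) auto
    ultimately show ?thesis using s1 lt pos by linarith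
  qed
qed

lemma lac_exists:
  fixes A :: "nat set"
  assumes "infinite A"
  shows "\<exists>Cn. Cn \<subseteq> A \<and> infinite Cn \<and> lac (int ` Cn)"
proof -
  define c where "c = rec_nat (enumerate A 1) (\<lambda>_ x. enumerate A (3 * x))"
  have c0: "c 0 = enumerate A 1" and cS: "\<And>j. c (Suc j) = enumerate A (3 * c j)"
    by (simp_all add: c_def)
  have cA: "c j \<in> A" for j
    by (cases j) (simp_all add: c0 cS enumerate_in_set assms)
  have cge: "c (Suc j) \<ge> 3 * c j" for j using le_enumerate[OF assms] by (simp add: cS)
  have c1: "c j \<ge> 1" for j
  proof (induction j)
    case 0 then show ?case using le_enumerate[OF assms, of 1] by (simp add: c0)
  next
    case (Suc j) then show ?case using cge[of j] by linarith
  qed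
  have sm: "strict_mono c"
  proof (rule strict_monoI_Suc)
    fix n show "c n < c (Suc n)" using cge[of n] c1[of n] by linarith
  qed
  have lacj: "2 * (\<Sum>i<j. c i) < c j" for j
  proof (induction j)
    case 0 then show ?case using c1[of 0] by simp
  next
    case (Suc j) then show ?case using cge[of j] by simp
  qed
  define Cn where "Cn = range c"
  have "lac (int ` Cn)"
    unfolding lac_def
  proof (intro conjI ballI)
    fix x assume "x \<in> int ` Cn" then show "x \<ge> 1" using c1 by (auto simp: Cn_def)
  next
    fix t assume "t \<in> int ` Cn"
    then obtain j where t: "t = int (c j)" by (auto simp: Cn_def)
    have "{x \<in> int ` Cn. x < t} = (int \<circ> c) ` {..<j}"
      using sm by (auto simp: Cn_def t strict_mono_less)
    moreover have "inj_on (int \<circ> c) {..<j}"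
      using strict_mono_imp_inj_on[OF sm] by (auto simp: inj_on_def)
    ultimately have "\<Sum>{x \<in> int ` Cn. x < t} = (\<Sum>i<j. int (c i))"
      using sum.reindex[of "int \<circ> c" "{..<j}" id] by simp
    then show "2 * \<Sum>{x \<in> int ` Cn. x < t} < t"
      using lacj[of j] t by (simp flip: of_nat_sum)
  qed
  moreover have "infinite Cn"
    unfolding Cn_def using strict_mono_imp_inj_on[OF sm] range_inj_infinite by blast
  moreover have "Cn \<subseteq> A" using cA by (auto simp: Cn_def)
  ultimately show ?thesis by blast
qed

lemma continuous_map_funpow:
  "continuous_map Y Y S \<Longrightarrow> continuous_map Y Y (S ^^ n)"
  by (induction n) (auto simp: continuous_map_compose)

lemma key:
  fixes Y :: "'a topology" and S :: "'a \<Rightarrow> 'a" and R :: "nat \<Rightarrow> nat set"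
  assumes cont: "continuous_map Y Y S" and mm: "mild_mixing Y S"
    and U: "openin Y U" "U \<noteq> {}" and V: "openin Y V" "V \<noteq> {}"
    and R: "\<And>m B. SIP_set B \<Longrightarrow> R m \<inter> B \<noteq> {}"
    and Radd: "\<And>m k. k \<in> R m \<Longrightarrow> k \<ge> 1 \<Longrightarrow> m + k \<in> R 0"
    and B: "SIP_set B"
  shows "\<exists>n\<in>B. n \<in> R 0 \<and> n \<in> return_times S U V"
proof -
  obtain A where A: "infinite A" "A \<subseteq> {1..}" "{n::nat. n \<ge> 1 \<and> int n \<in> SIP (int ` A)} \<subseteq> B"
    using B unfolding SIP_set_def by blast
  obtain Cn where Cn: "Cn \<subseteq> A" "infinite Cn" "lac (int ` Cn)"
    using lac_exists[OF A(1)] by blast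
  define C where "C = int ` Cn"
  have lacC: "lac C" using Cn by (simp add: C_def)
  have Cpos: "\<And>c. c \<in> C \<Longrightarrow> c \<ge> 1" using lacC by (auto simp: lac_def)
  have CA: "C \<subseteq> int ` A" using Cn by (auto simp: C_def)
  have tailSIP: "SIP_set {n. n \<ge> 1 \<and> int n \<in> SIP (C \<inter> {M<..})}" for M
  proof -
    define A' where "A' = {x \<in> Cn. int x > M}"
    have "finite {x::nat. \<not> int x > M}"
      by (rule finite_subset[of _ "{..nat M}"]) auto
    moreover have "A' = Cn - {x::nat. \<not> int x > M}" by (auto simp: A'_def)
    ultimately have "infinite A'" using Cn(2) by (simp add: Diff_infinite_finite)
    moreover have "A' \<subseteq> {1..}" using Cpos by (force simp: A'_def C_def)
    moreover have "int ` A' = C \<inter> {M<..}" by (auto simp: A'_def C_def)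
    ultimately show ?thesis unfolding SIP_set_def by (intro exI[of _ A']) auto
  qed
  have mmx: "\<exists>n\<in>B'. n \<in> return_times S U' V'"
    if "openin Y U'" "openin Y V'" "U' \<noteq> {}" "V' \<noteq> {}" "SIP_set B'" for U' V' B'
    using mm that unfolding mild_mixing_def by blast
  have contN: "\<And>n. continuous_map Y Y (S ^^ n)" using cont by (rule continuous_map_funpow)
  obtain n0 where n0: "n0 \<in> return_times S U V" "int n0 \<in> SIP (C \<inter> {0<..})"
    using mmx[OF U(1) V(1) U(2) V(2) tailSIP[of 0]] by blast
  obtain F0 G0 where FG0: "F0 \<subseteq> C \<inter> {0<..}" "G0 \<subseteq> C \<inter> {0<..}" "finite F0" "finite G0"
     "F0 \<inter> G0 = {}" "int n0 = \<Sum>F0 - \<Sum>G0"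
    using n0(2) unfolding SIP_iff by blast
  define M0 where "M0 = Max (insert 0 (F0 \<union> G0))"
  have n0sip: "int n0 \<in> SIP (C \<inter> {..M0})"
  proof -
    have "F0 \<subseteq> C \<inter> {..M0}" "G0 \<subseteq> C \<inter> {..M0}" using FG0 by (auto simp: M0_def)
    then show ?thesis using FG0 unfolding SIP_iff by blast
  qed
  define W0 where "W0 = U \<inter> {x \<in> topspace Y. (S ^^ n0) x \<in> V}"
  have W0open: "openin Y W0" unfolding W0_def
    using U(1) openin_continuous_map_preimage[OF contN V(1)] by blast
  have W0ne: "W0 \<noteq> {}"
    using n0(1) openin_subset[OF U(1)] unfolding W0_def return_times_def by blast
  define good where "good W M W' M' b \<longleftrightarrow>
     (\<exists>F G. F \<subseteq> C \<inter> {M<..} \<and> G \<subseteq> C \<inter> {M<..} \<and> finite F \<and> finite G \<and> F \<inter> G = {}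
         \<and> int b = \<Sum>F - \<Sum>G \<and> M' = Max (insert M (F \<union> G)))
     \<and> b \<ge> 1 \<and> (S ^^ b) ` W \<inter> W \<noteq> {} \<and> W' = W \<inter> {x \<in> topspace Y. (S ^^ b) x \<in> W}"
    for W M W' M' b
  have ex_good: "\<exists>p. good W M (fst p) (fst (snd p)) (snd (snd p))"
    if ow: "openin Y W" and wne: "W \<noteq> {}" for W M
  proof -
    obtain b where b: "b \<in> return_times S W W" "int b \<in> SIP (C \<inter> {M<..})"
      using mmx[OF ow ow wne wne tailSIP[of M]] by blast
    obtain F G where "F \<subseteq> C \<inter> {M<..}" "G \<subseteq> C \<inter> {M<..}" "finite F" "finite G"
     "F \<inter> G = {}" "int b = \<Sum>F - \<Sum>G"
      using b(2) unfolding SIP_iff by blast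
    then have "good W M (W \<inter> {x \<in> topspace Y. (S ^^ b) x \<in> W}) (Max (insert M (F \<union> G))) b"
      using b(1) unfolding good_def return_times_def by blast
    then show ?thesis by (intro exI[of _ "(_, _, b)"]) simp
  qed
  have good_open: "openin Y W' \<and> W' \<noteq> {}" if g: "good W M W' M' b" and ow: "openin Y W" for W M W' M' b
  proof
    show "openin Y W'" using g ow openin_continuous_map_preimage[OF contN ow]
      unfolding good_def by blast
    show "W' \<noteq> {}" using g openin_subset[OF ow] unfolding good_def by blast
  qed
  define st where "st = rec_nat (W0, M0, 0::nat)
      (\<lambda>_ q. SOME p. good (fst q) (fst (snd q)) (fst p) (fst (snd p)) (snd (snd p)))"
  define Wk where "Wk k = fst (st k)" for k
  define Mk where "Mk k = fst (snd (st k))" for k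
  define b where "b k = snd (snd (st (Suc k)))" for k
  have Wk0: "Wk 0 = W0" and Mk0: "Mk 0 = M0" by (simp_all add: Wk_def Mk_def st_def)
  have stS: "st (Suc k) = (SOME p. good (Wk k) (Mk k) (fst p) (fst (snd p)) (snd (snd p)))" for k
    by (simp add: st_def Wk_def Mk_def)
  have gk_if: "good (Wk k) (Mk k) (Wk (Suc k)) (Mk (Suc k)) (b k)"
    if "openin Y (Wk k)" "Wk k \<noteq> {}" for k
  proof -
    have "good (Wk k) (Mk k) (fst (st (Suc k))) (fst (snd (st (Suc k)))) (snd (snd (st (Suc k))))"
      unfolding stS by (rule someI_ex[OF ex_good[OF that]])
    then show ?thesis by (simp add: Wk_def Mk_def b_def)
  qed
  have inv: "openin Y (Wk k) \<and> Wk k \<noteq> {}" for k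
  proof (induction k)
    case 0 then show ?case using W0open W0ne by (simp add: Wk0)
  next
    case (Suc k) then show ?case using good_open gk_if by blast
  qed
  have gk: "good (Wk k) (Mk k) (Wk (Suc k)) (Mk (Suc k)) (b k)" for k
    using gk_if inv by blast
  have "\<forall>k. \<exists>FG. fst FG \<subseteq> C \<inter> {Mk k<..} \<and> snd FG \<subseteq> C \<inter> {Mk k<..} \<and> finite (fst FG) \<and> finite (snd FG)
     \<and> fst FG \<inter> snd FG = {} \<and> int (b k) = \<Sum>(fst FG) - \<Sum>(snd FG)
     \<and> Mk (Suc k) = Max (insert (Mk k) (fst FG \<union> snd FG))"
  proof
    fix k
    from gk[of k] obtain F G where "F \<subseteq> C \<inter> {Mk k<..} \<and> G \<subseteq> C \<inter> {Mk k<..} \<and> finite F \<and> finite G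
     \<and> F \<inter> G = {} \<and> int (b k) = \<Sum>F - \<Sum>G \<and> Mk (Suc k) = Max (insert (Mk k) (F \<union> G))"
      unfolding good_def by blast
    then show "\<exists>FG. fst FG \<subseteq> C \<inter> {Mk k<..} \<and> snd FG \<subseteq> C \<inter> {Mk k<..} \<and> finite (fst FG) \<and> finite (snd FG)
     \<and> fst FG \<inter> snd FG = {} \<and> int (b k) = \<Sum>(fst FG) - \<Sum>(snd FG)
     \<and> Mk (Suc k) = Max (insert (Mk k) (fst FG \<union> snd FG))"
      by (intro exI[of _ "(F, G)"]) simp
  qed
  then obtain fg where fg: "\<forall>k. fst (fg k) \<subseteq> C \<inter> {Mk k<..} \<and> snd (fg k) \<subseteq> C \<inter> {Mk k<..} \<and> finite (fst (fg k)) \<and> finite (snd (fg k))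
     \<and> fst (fg k) \<inter> snd (fg k) = {} \<and> int (b k) = \<Sum>(fst (fg k)) - \<Sum>(snd (fg k))
     \<and> Mk (Suc k) = Max (insert (Mk k) (fst (fg k) \<union> snd (fg k)))"
    by (rule choice[THEN exE]) blast
  define F where "F k = fst (fg k)" for k
  define G where "G k = snd (fg k)" for k
  have FG: "\<And>k. F k \<subseteq> C \<inter> {Mk k<..}" "\<And>k. G k \<subseteq> C \<inter> {Mk k<..}"
    "\<And>k. finite (F k)" "\<And>k. finite (G k)" "\<And>k. F k \<inter> G k = {}"
    "\<And>k. int (b k) = \<Sum>(F k) - \<Sum>(G k)" "\<And>k. Mk (Suc k) = Max (insert (Mk k) (F k \<union> G k))"
    using fg by (simp_all add: F_def G_def)
  have b1: "b k \<ge> 1" for k using gk[of k] unfolding good_def by blast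
  have WkS: "Wk (Suc k) = Wk k \<inter> {x \<in> topspace Y. (S ^^ b k) x \<in> Wk k}" for k
    using gk[of k] unfolding good_def by blast
  have P1: "\<forall>x\<in>Wk k. \<forall>P \<subseteq> {..<k}. (S ^^ (\<Sum>j\<in>P. b j)) x \<in> W0" for k
  proof (induction k)
    case 0 then show ?case by (simp add: Wk0)
  next
    case (Suc k)
    show ?case
    proof (intro ballI allI impI)
      fix x P assume x: "x \<in> Wk (Suc k)" and P: "P \<subseteq> {..<Suc k}"
      have x1: "x \<in> Wk k" and x2: "(S ^^ b k) x \<in> Wk k" using x WkS by auto
      show "(S ^^ (\<Sum>j\<in>P. b j)) x \<in> W0"
      proof (cases "k \<in> P")
        case True
        have fP: "finite P" using P finite_subset by blast
        have "(\<Sum>j\<in>P. b j) = (\<Sum>j\<in>P - {k}. b j) + b k" using True fP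
          by (simp add: sum.remove)
        then have "(S ^^ (\<Sum>j\<in>P. b j)) x = (S ^^ (\<Sum>j\<in>P - {k}. b j)) ((S ^^ b k) x)"
          by (simp add: funpow_add)
        moreover have "P - {k} \<subseteq> {..<k}" using P by auto
        ultimately show ?thesis using Suc x2 by auto
      next
        case False
        then have "P \<subseteq> {..<k}" using P less_Suc_eq by auto
        then show ?thesis using Suc x1 by auto
      qed
    qed
  qed
  have WkW0: "Wk k \<subseteq> W0" for k using P1[of k] by force
  have Mmono1: "Mk k \<le> Mk (Suc k)" for k using FG(3,4)[of k] FG(7)[of k] by simp
  have Mmono: "j \<le> k \<Longrightarrow> Mk j \<le> Mk k" for j k
    by (rule lift_Suc_mono_le[of Mk]) (use Mmono1 in auto)
  have FGle: "F k \<subseteq> C \<inter> {..Mk (Suc k)}" "G k \<subseteq> C \<inter> {..Mk (Suc k)}" for k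
    using FG(1-4,7)[of k] by auto
  have bmono1: "b k < b (Suc k)" for k
  proof -
    have big: "\<Sum>(F (Suc k)) - \<Sum>(G (Suc k)) > \<Sum>{c\<in>C. c \<le> Mk (Suc k)}"
      using FG(1-5)[of "Suc k"] FG(6)[of "Suc k"] b1[of "Suc k"]
      by (intro lac_big[OF lacC]) auto
    have "\<Sum>(G k) \<ge> 0" using FG(2)[of k] Cpos by (intro sum_nonneg) force
    moreover have "\<Sum>(F k) \<le> \<Sum>{c\<in>C. c \<le> Mk (Suc k)}"
      using FGle(1)[of k] lac_finite_le[OF lacC] Cpos by (intro sum_mono2) force+
    ultimately have "int (b k) \<le> \<Sum>{c\<in>C. c \<le> Mk (Suc k)}" using FG(6)[of k] by linarith
    then show ?thesis using big FG(6)[of "Suc k"] by linarith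
  qed
  have smb: "strict_mono b" by (rule strict_monoI_Suc) (rule bmono1)
  define E where "E k = C \<inter> {Mk k<..Mk (Suc k)}" for k
  have bsip: "int (b k) \<in> SIP (E k)" for k
  proof -
    have "F k \<subseteq> E k" "G k \<subseteq> E k" using FG(1,2)[of k] FGle[of k] by (auto simp: E_def)
    then show ?thesis using FG(3-6)[of k] unfolding SIP_iff by blast
  qed
  have Edisj: "E j \<inter> E k = {}" if "j \<noteq> k" for j k
  proof -
    have "E j \<inter> E k = {}" if "j < k" for j k
    proof -
      have "Mk (Suc j) \<le> Mk k" using that Mmono by simp
      then show ?thesis by (auto simp: E_def)
    qed
    then show ?thesis using \<open>j \<noteq> k\<close> by (metis inf_commute nat_neq_iff)
  qed
  have E0disj: "(C \<inter> {..M0}) \<inter> E k = {}" for k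
    using Mmono[of 0 k] by (auto simp: E_def Mk0)
  define B' where "B' = {k. k \<ge> 1 \<and> int k \<in> SIP (int ` range b)}"
  have "SIP_set B'"
    unfolding SIP_set_def B'_def
    using b1 strict_mono_imp_inj_on[OF smb] range_inj_infinite
    by (intro exI[of _ "range b"]) auto
  then obtain k where k: "k \<in> R n0" "k \<ge> 1" "int k \<in> SIP (int ` range b)"
    using R[of B' n0] unfolding B'_def by blast
  obtain F' G' where FG': "F' \<subseteq> int ` range b" "G' \<subseteq> int ` range b" "finite F'" "finite G'"
    "F' \<inter> G' = {}" "int k = \<Sum>F' - \<Sum>G'"
    using k(3) unfolding SIP_iff by blast
  define ib where "ib j = int (b j)" for j
  have injib: "inj ib" using strict_mono_imp_inj_on[OF smb] by (auto simp: ib_def inj_on_def)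
  define P where "P = ib -` F'"
  define Q where "Q = ib -` G'"
  have PQfin: "finite P" "finite Q" using FG' injib by (auto simp: P_def Q_def finite_vimageI)
  have PQd: "P \<inter> Q = {}" using FG'(5) by (auto simp: P_def Q_def)
  have FP: "F' = ib ` P" and GQ: "G' = ib ` Q"
    using FG'(1,2) by (auto simp: P_def Q_def ib_def)
  have sF: "\<Sum>F' = (\<Sum>j\<in>P. int (b j))"
    unfolding FP using sum.reindex[of ib P id] injib by (simp add: inj_on_def ib_def)
  have sG: "\<Sum>G' = (\<Sum>j\<in>Q. int (b j))"
    unfolding GQ using sum.reindex[of ib Q id] injib by (simp add: inj_on_def ib_def)
  have sumeq: "(\<Sum>j\<in>P. b j) = k + (\<Sum>j\<in>Q. b j)"
    using FG'(6) sF sG by (simp flip: of_nat_sum)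
  obtain K where K: "P \<union> Q \<subseteq> {..<K}"
    using PQfin by (metis finite_UnI finite_nat_iff_bounded)
  obtain x where x: "x \<in> Wk K" using inv[of K] by blast
  define y where "y = (S ^^ (\<Sum>j\<in>Q. b j)) x"
  have yW: "y \<in> W0" using P1[of K] x K by (auto simp: y_def)
  have "(S ^^ k) y = (S ^^ (\<Sum>j\<in>P. b j)) x" by (simp add: y_def sumeq funpow_add)
  then have kyW: "(S ^^ k) y \<in> W0" using P1[of K] x K by auto
  have "(S ^^ (n0 + k)) y = (S ^^ n0) ((S ^^ k) y)" by (simp add: funpow_add)
  then have "(S ^^ (n0 + k)) y \<in> V" using kyW by (auto simp: W0_def)
  moreover have "y \<in> U" using yW by (auto simp: W0_def)
  ultimately have ret: "n0 + k \<in> return_times S U V"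
    unfolding return_times_def using k(2) by auto
  have inR: "n0 + k \<in> R 0" using Radd k by blast
  define f where "f j = (if j \<in> P then int (b j) else - int (b j))" for j
  have "(\<Sum>j\<in>P \<union> Q. f j) \<in> SIP (\<Union>j\<in>P \<union> Q. E j)"
  proof (rule SIP_sum)
    show "finite (P \<union> Q)" using PQfin by simp
    show "E j \<inter> E k = {}" if "j \<noteq> k" for j k using Edisj that by blast
    show "f j \<in> SIP (E j)" for j
      using bsip[of j] SIP_uminus[OF bsip[of j]] by (simp add: f_def)
  qed
  moreover have "(\<Sum>j\<in>P \<union> Q. f j) = int k"
  proof -
    have "(\<Sum>j\<in>P \<union> Q. f j) = (\<Sum>j\<in>P. f j) + (\<Sum>j\<in>Q. f j)"
      using PQfin PQd by (simp add: sum.union_disjoint)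
    also have "\<dots> = (\<Sum>j\<in>P. int (b j)) - (\<Sum>j\<in>Q. int (b j))"
    proof -
      have "(\<Sum>j\<in>P. f j) = (\<Sum>j\<in>P. int (b j))"
        by (rule sum.cong) (auto simp: f_def)
      moreover have "(\<Sum>j\<in>Q. f j) = (\<Sum>j\<in>Q. - int (b j))"
        by (rule sum.cong) (use PQd in \<open>auto simp: f_def\<close>)
      moreover have "(\<Sum>j\<in>Q. - int (b j)) = - (\<Sum>j\<in>Q. int (b j))" by (rule sum_negf)
      ultimately show ?thesis by linarith
    qed
    finally show ?thesis using FG'(6) sF sG by linarith
  qed
  ultimately have ksip: "int k \<in> SIP (\<Union>j\<in>P \<union> Q. E j)" by (simp only:)
  have dj: "(C \<inter> {..M0}) \<inter> (\<Union>j\<in>P \<union> Q. E j) = {}" using E0disj by blast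
  have s1: "int n0 + int k \<in> SIP ((C \<inter> {..M0}) \<union> (\<Union>j\<in>P \<union> Q. E j))"
    by (rule SIP_add[OF n0sip ksip dj])
  have "(C \<inter> {..M0}) \<union> (\<Union>j\<in>P \<union> Q. E j) \<subseteq> int ` A"
    using CA unfolding E_def by blast
  then have "int n0 + int k \<in> SIP (int ` A)" using SIP_mono s1 by blast
  then have "int (n0 + k) \<in> SIP (int ` A)" by simp
  then have "n0 + k \<in> B" using A(3) k(2) by auto
  then show ?thesis using inR ret by blast
qed


lemma hom_funpow: "homeomorphic_map X X f \<Longrightarrow> homeomorphic_map X X (f ^^ n)"
proof (induction n)
  case 0 then show ?case using homeomorphic_map_id[of X X] by (simp add: id_def)
next
  case (Suc n)
  then have "homeomorphic_map X X (f \<circ> f ^^ n)"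
    using homeomorphic_map_compose[of X X "f ^^ n" X f] by blast
  then show ?case by (simp add: comp_def)
qed

lemma SIP_set_pos: "SIP_set B \<Longrightarrow> \<exists>n\<in>B. n \<ge> 1"
proof -
  assume "SIP_set B"
  then obtain A where A: "infinite A" "A \<subseteq> {1..}" "{n::nat. n \<ge> 1 \<and> int n \<in> SIP (int ` A)} \<subseteq> B"
    unfolding SIP_set_def by blast
  obtain a where "a \<in> A" using A(1) by (metis ex_in_conv finite.emptyI)
  then have "a \<ge> 1" "int a \<in> SIP (int ` A)" using A(2) by (auto intro: SIP_single)
  then show ?thesis using A(3) by blast
qed

lemma box:
  assumes "finite J" and hom: "\<And>i. i \<in> J \<Longrightarrow> homeomorphic_map (X i) (X i) (T i)"
    and mm: "\<And>i. i \<in> J \<Longrightarrow> mild_mixing (X i) (T i)"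
  shows "(\<forall>i\<in>J. openin (X i) (U i) \<and> openin (X i) (V i) \<and> U i \<noteq> {} \<and> V i \<noteq> {}) \<Longrightarrow> SIP_set B
     \<Longrightarrow> \<exists>n\<in>B. n \<ge> 1 \<and> (\<forall>i\<in>J. n \<in> return_times (T i) (U i) (V i))"
  using assms
proof (induction J arbitrary: U V B rule: finite_induct)
  case empty
  then show ?case using SIP_set_pos by auto
next
  case (insert j J)
  define R where "R m = {k. \<forall>i\<in>J. k \<in> return_times (T i) ((T i ^^ m) ` U i) (V i)}" for m
  have "\<exists>n\<in>B. n \<in> R 0 \<and> n \<in> return_times (T j) (U j) (V j)"
  proof (rule key)
    show "continuous_map (X j) (X j) (T j)" using insert.prems by (auto intro: homeomorphic_imp_continuous_map)
    show "mild_mixing (X j) (T j)" using insert.prems by auto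
    show "openin (X j) (U j)" "U j \<noteq> {}" "openin (X j) (V j)" "V j \<noteq> {}" using insert.prems by auto
    show "SIP_set B" by fact
    show "R m \<inter> B' \<noteq> {}" if "SIP_set B'" for m B'
    proof -
      have "\<forall>i\<in>J. openin (X i) ((T i ^^ m) ` U i) \<and> openin (X i) (V i) \<and> (T i ^^ m) ` U i \<noteq> {} \<and> V i \<noteq> {}"
      proof
        fix i assume i: "i \<in> J"
        have "open_map (X i) (X i) (T i ^^ m)"
          using hom_funpow[of "X i" "T i" m] insert.prems i by (auto intro: homeomorphic_imp_open_map)
        then show "openin (X i) ((T i ^^ m) ` U i) \<and> openin (X i) (V i) \<and> (T i ^^ m) ` U i \<noteq> {} \<and> V i \<noteq> {}"
          using insert.prems i unfolding open_map_def by auto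
      qed
      from insert.IH[OF this that] insert.prems
      show ?thesis unfolding R_def by auto
    qed
    show "m + k \<in> R 0" if "k \<in> R m" "k \<ge> 1" for m k
    proof -
      have "(T i ^^ (m + k)) ` U i = (T i ^^ k) ` ((T i ^^ m) ` U i)" for i
        by (simp add: add.commute funpow_add image_comp)
      then show ?thesis using that unfolding R_def return_times_def by auto
    qed
  qed
  then obtain n where "n \<in> B" "n \<in> R 0" "n \<in> return_times (T j) (U j) (V j)" by blast
  then show ?case unfolding R_def return_times_def by (intro bexI[of _ n]) auto
qed

lemma prod_map_funpow:
  "z \<in> extensional I \<Longrightarrow> (prod_map I T ^^ n) z = (\<lambda>i\<in>I. (T i ^^ n) (z i))"
proof (induction n)
  case 0 then show ?case by (simp add: extensional_restrict)
next
  case (Suc n)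
  have "(prod_map I T ^^ Suc n) z = prod_map I T ((prod_map I T ^^ n) z)" by simp
  also have "\<dots> = (\<lambda>i\<in>I. (T i ^^ Suc n) (z i))" unfolding Suc.IH[OF Suc.prems] by (auto simp: prod_map_def restrict_def)
  finally show ?case .
qed

lemma prod_map_cont:
  assumes "\<And>i. i \<in> I \<Longrightarrow> continuous_map (X i) (X i) (f i)"
  shows "continuous_map (product_topology X I) (product_topology X I) (prod_map I f)"
proof (rule continuous_map_coordinatewise_then_product)
  fix i assume i: "i \<in> I"
  have c: "continuous_map (product_topology X I) (X i) (f i \<circ> (\<lambda>x. x i))"
    by (rule continuous_map_compose[OF continuous_map_product_coordinates[OF i, of X] assms[OF i]])
  have eq: "(\<lambda>x. prod_map I f x i) = f i \<circ> (\<lambda>x. x i)"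
    using i by (simp add: prod_map_def fun_eq_iff)
  show "continuous_map (product_topology X I) (X i) (\<lambda>x. prod_map I f x i)"
    unfolding eq by (rule c)
next
  fix i x assume "i \<notin> I"
  then show "prod_map I f x i = undefined" by (simp add: prod_map_def)
qed
lemma prod_map_hom:
  assumes hom: "\<And>i. i \<in> I \<Longrightarrow> homeomorphic_map (X i) (X i) (T i)"
  shows "homeomorphic_map (product_topology X I) (product_topology X I) (prod_map I T)"
proof -
  have "\<forall>i\<in>I. \<exists>g. homeomorphic_maps (X i) (X i) (T i) g"
    using hom homeomorphic_map_maps by blast
  then obtain g where g: "\<forall>i\<in>I. homeomorphic_maps (X i) (X i) (T i) (g i)"
    by (rule bchoice[THEN exE])
  have cT: "continuous_map (X i) (X i) (T i)" and cg: "continuous_map (X i) (X i) (g i)"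
    and gT: "\<forall>x\<in>topspace (X i). g i (T i x) = x" and Tg: "\<forall>x\<in>topspace (X i). T i (g i x) = x"
    if "i \<in> I" for i
    using g that unfolding homeomorphic_maps_def by blast+
  have "homeomorphic_maps (product_topology X I) (product_topology X I) (prod_map I T) (prod_map I g)"
    unfolding homeomorphic_maps_def
  proof (intro conjI ballI)
    show "continuous_map (product_topology X I) (product_topology X I) (prod_map I T)"
      by (rule prod_map_cont) (rule cT)
    show "continuous_map (product_topology X I) (product_topology X I) (prod_map I g)"
      by (rule prod_map_cont) (rule cg)
  next
    fix x assume x: "x \<in> topspace (product_topology X I)"
    show "prod_map I g (prod_map I T x) = x"
    proof
      fix i show "prod_map I g (prod_map I T x) i = x i"
      proof (cases "i \<in> I")
        case True
        then have "x i \<in> topspace (X i)" using x by (auto simp: PiE_iff)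
        then show ?thesis using gT[OF True] True unfolding prod_map_def by simp
      next
        case False then show ?thesis using x unfolding prod_map_def by (auto simp: PiE_iff extensional_def)
      qed
    qed
  next
    fix x assume x: "x \<in> topspace (product_topology X I)"
    show "prod_map I T (prod_map I g x) = x"
    proof
      fix i show "prod_map I T (prod_map I g x) i = x i"
      proof (cases "i \<in> I")
        case True
        then have "x i \<in> topspace (X i)" using x by (auto simp: PiE_iff)
        then show ?thesis using Tg[OF True] True unfolding prod_map_def by simp
      next
        case False then show ?thesis using x unfolding prod_map_def by (auto simp: PiE_iff extensional_def)
      qed
    qed
  qed
  then show ?thesis by (rule homeomorphic_maps_imp_map)
qed
lemma prod_mm:
  fixes X :: "'i \<Rightarrow> 'a topology" and T :: "'i \<Rightarrow> 'a \<Rightarrow> 'a" and I :: "'i set"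
  assumes hom: "\<And>i. i \<in> I \<Longrightarrow> homeomorphic_map (X i) (X i) (T i)"
    and mmi: "\<And>i. i \<in> I \<Longrightarrow> mild_mixing (X i) (T i)"
    and topN: "\<And>i n. i \<in> I \<Longrightarrow> (T i ^^ n) ` topspace (X i) = topspace (X i)"
  shows "mild_mixing (product_topology X I) (prod_map I T)"
    unfolding mild_mixing_def
  proof (intro allI impI)
    fix U V B
    assume UV: "openin (product_topology X I) U \<and> openin (product_topology X I) V \<and> U \<noteq> {} \<and> V \<noteq> {}" and B: "SIP_set B"
    obtain x where x: "x \<in> U" using UV by blast
    obtain y where y: "y \<in> V" using UV by blast
    obtain XU where XU: "x \<in> (\<Pi>\<^sub>E i\<in>I. XU i)" "\<And>i. openin (X i) (XU i)"
      "finite {i. XU i \<noteq> topspace (X i)}" "(\<Pi>\<^sub>E i\<in>I. XU i) \<subseteq> U"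
      using product_topology_open_contains_basis[of X I U x] UV x by blast
    obtain XV where XV: "y \<in> (\<Pi>\<^sub>E i\<in>I. XV i)" "\<And>i. openin (X i) (XV i)"
      "finite {i. XV i \<noteq> topspace (X i)}" "(\<Pi>\<^sub>E i\<in>I. XV i) \<subseteq> V"
      using product_topology_open_contains_basis[of X I V y] UV y by blast
    define J where "J = {i\<in>I. XU i \<noteq> topspace (X i) \<or> XV i \<noteq> topspace (X i)}"
    have "J \<subseteq> {i. XU i \<noteq> topspace (X i)} \<union> {i. XV i \<noteq> topspace (X i)}"
      unfolding J_def by blast
    then have fJ: "finite J"
      by (rule finite_subset) (rule finite_UnI[OF XU(3) XV(3)])
    have JI: "J \<subseteq> I" by (auto simp: J_def)
    have op: "\<forall>i\<in>J. openin (X i) (XU i) \<and> openin (X i) (XV i) \<and> XU i \<noteq> {} \<and> XV i \<noteq> {}"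
    proof (intro ballI conjI)
      fix i assume "i \<in> J"
      then have i: "i \<in> I" using JI by blast
      show "openin (X i) (XU i)" by (rule XU(2))
      show "openin (X i) (XV i)" by (rule XV(2))
      show "XU i \<noteq> {}" using PiE_mem[OF XU(1) i] by blast
      show "XV i \<noteq> {}" using PiE_mem[OF XV(1) i] by blast
    qed
    have h1: "\<And>i. i \<in> J \<Longrightarrow> homeomorphic_map (X i) (X i) (T i)" using hom JI by blast
    have h2: "\<And>i. i \<in> J \<Longrightarrow> mild_mixing (X i) (T i)" using mmi JI by blast
    have "\<exists>n\<in>B. n \<ge> 1 \<and> (\<forall>i\<in>J. n \<in> return_times (T i) (XU i) (XV i))"
      by (rule box[OF fJ h1 h2 op B])
    then obtain n where n: "n \<in> B" "n \<ge> 1" "\<forall>i\<in>J. n \<in> return_times (T i) (XU i) (XV i)"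
      by blast
    have "\<forall>i\<in>J. \<exists>z. z \<in> XU i \<and> (T i ^^ n) z \<in> XV i"
      using n(3) unfolding return_times_def by blast
    then obtain zf where zf0: "\<forall>i\<in>J. zf i \<in> XU i \<and> (T i ^^ n) (zf i) \<in> XV i"
      by (rule bchoice[THEN exE])
    then have zf: "\<And>i. i \<in> J \<Longrightarrow> zf i \<in> XU i \<and> (T i ^^ n) (zf i) \<in> XV i" by blast
    define z where "z = (\<lambda>i\<in>I. if i \<in> J then zf i else x i)"
    have zU: "z \<in> (\<Pi>\<^sub>E i\<in>I. XU i)" using XU(1) zf by (auto simp: z_def PiE_iff)
    have "(prod_map I T ^^ n) z = (\<lambda>i\<in>I. (T i ^^ n) (z i))"
      by (rule prod_map_funpow) (simp add: z_def)
    moreover have "(\<lambda>i\<in>I. (T i ^^ n) (z i)) \<in> (\<Pi>\<^sub>E i\<in>I. XV i)"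
    proof -
      have "(T i ^^ n) (z i) \<in> XV i" if i: "i \<in> I" for i
      proof (cases "i \<in> J")
        case True then show ?thesis using zf i by (simp add: z_def)
      next
        case False
        then have eq: "XV i = topspace (X i)" "XU i = topspace (X i)" using i by (auto simp: J_def)
        have "x i \<in> topspace (X i)" using XU(1) i eq by (auto simp: PiE_iff)
        then show ?thesis using topN[of i n, OF i] False i eq by (auto simp: z_def)
      qed
      then show ?thesis by auto
    qed
    ultimately have zV0: "(prod_map I T ^^ n) z \<in> (\<Pi>\<^sub>E i\<in>I. XV i)" by (simp only:)
    have zV: "(prod_map I T ^^ n) z \<in> V" using zV0 XV(4) by (rule subsetD[rotated])
    have zU': "z \<in> U" using zU XU(4) by (rule subsetD[rotated])
    have "(prod_map I T ^^ n) z \<in> (prod_map I T ^^ n) ` U" using zU' by (rule imageI)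
    then have "(prod_map I T ^^ n) ` U \<inter> V \<noteq> {}" using zV by (auto simp del: funpow.simps)
    then have "n \<in> return_times (prod_map I T) U V"
      using n(2) unfolding return_times_def by blast
    then show "return_times (prod_map I T) U V \<inter> B \<noteq> {}" using n(1) by blast
  qed

theorem corollary3p8:
  fixes X :: "'i \<Rightarrow> 'a topology" and T :: "'i \<Rightarrow> 'a \<Rightarrow> 'a" and I :: "'i set"
  assumes "\<And>i. i \<in> I \<Longrightarrow> dyn_system (X i) (T i)"
      and "\<And>i. i \<in> I \<Longrightarrow> mild_mixing (X i) (T i)"
  shows "mild_mixing (product_topology X I) (prod_map I T)
       \<and> compact_space (product_topology X I)
       \<and> homeomorphic_map (product_topology X I) (product_topology X I) (prod_map I T)
       \<and> (countable I \<longrightarrow> dyn_system (product_topology X I) (prod_map I T))"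
proof -
  have hom: "\<And>i. i \<in> I \<Longrightarrow> homeomorphic_map (X i) (X i) (T i)"
    and cpt: "\<And>i. i \<in> I \<Longrightarrow> compact_space (X i)"
    and met: "\<And>i. i \<in> I \<Longrightarrow> metrizable_space (X i)"
    using assms(1) by (auto simp: dyn_system_def)
  have topN: "(T i ^^ n) ` topspace (X i) = topspace (X i)" if "i \<in> I" for i n
    using hom_funpow[OF hom[OF that], of n] homeomorphic_imp_surjective_map by blast
  let ?P = "product_topology X I"
  have C: "compact_space ?P"
    using cpt by (simp add: compact_space_product_topology)
  have H: "homeomorphic_map ?P ?P (prod_map I T)"
    by (rule prod_map_hom) (rule hom)
  have MM: "mild_mixing ?P (prod_map I T)"
    by (rule prod_mm[OF hom assms(2) topN])
  have D: "countable I \<longrightarrow> dyn_system ?P (prod_map I T)"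
  proof
    assume "countable I"
    then have "metrizable_space ?P"
      unfolding metrizable_space_product_topology using met
      by (auto intro: countable_subset[of _ I])
    then show "dyn_system ?P (prod_map I T)" using C H by (simp add: dyn_system_def)
  qed
  show ?thesis using MM C H D by blast
qed

end
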